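(* Let $D$ be a Dedekind domain with field of fractions $K$ and let $A$ be a $D$-algebra with standard assumptions. Then $\textnormal{Int}_K(A)\neq D[X]$ if and only if there exists a nonzero prime ideal $P$ of $D$ with $D/P$ finite such that $A/PA$ is an algebraic $D/P$-algebra of bounded degree.
   Context: A $D$-algebra $A$ satisfies the standard assumptions if it is torsion-free as a $D$-module and $A\cap K = D$ inside $K\otimes_D A$; polynomials in $K[X]$ are evaluated in $K\otimes_D A$, and $\textnormal{Int}_K(A)=\{f\in K[X]\mid f(A)\subseteq A\}$. An algebra over a field $F$ is algebraic of bounded degree if there is $n$ such that every element satisfies a nonzero polynomial over $F$ of degree at most $n$. *)

theory Defs
  imports "HOL-Computational_Algebra.Polynomial"
begin

definition subring_of :: "'k::comm_ring_1 set \<Rightarrow> bool" where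
  "subring_of D \<longleftrightarrow> 0 \<in> D \<and> 1 \<in> D \<and>
     (\<forall>x\<in>D. \<forall>y\<in>D. x + y \<in> D \<and> x - y \<in> D \<and> x * y \<in> D)"

definition is_frac_field_of :: "'k::field set \<Rightarrow> bool" where
  "is_frac_field_of D \<longleftrightarrow> (\<forall>x. \<exists>a\<in>D. \<exists>b\<in>D. b \<noteq> 0 \<and> x = a / b)"

definition ideal_of :: "'k::comm_ring_1 set \<Rightarrow> 'k set \<Rightarrow> bool" where
  "ideal_of D I \<longleftrightarrow> I \<subseteq> D \<and> 0 \<in> I \<and>
     (\<forall>x\<in>I. \<forall>y\<in>I. x + y \<in> I) \<and> (\<forall>r\<in>D. \<forall>x\<in>I. r * x \<in> I)"

definition prime_ideal_of :: "'k::comm_ring_1 set \<Rightarrow> 'k set \<Rightarrow> bool" where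
  "prime_ideal_of D P \<longleftrightarrow> ideal_of D P \<and> P \<noteq> D \<and>
     (\<forall>a\<in>D. \<forall>b\<in>D. a * b \<in> P \<longrightarrow> a \<in> P \<or> b \<in> P)"

definition maximal_ideal_of :: "'k::comm_ring_1 set \<Rightarrow> 'k set \<Rightarrow> bool" where
  "maximal_ideal_of D M \<longleftrightarrow> ideal_of D M \<and> M \<noteq> D \<and>
     (\<forall>J. ideal_of D J \<and> M \<subseteq> J \<longrightarrow> J = M \<or> J = D)"

definition noetherian_of :: "'k::comm_ring_1 set \<Rightarrow> bool" where
  "noetherian_of D \<longleftrightarrow> (\<forall>I. ideal_of D I \<longrightarrow>
     (\<exists>G. finite G \<and> G \<subseteq> D \<and> I = {\<Sum>g\<in>G. c g * g | c. \<forall>g\<in>G. c g \<in> D}))"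

definition integrally_closed_in :: "'k::field set \<Rightarrow> bool" where
  "integrally_closed_in D \<longleftrightarrow> (\<forall>x p. lead_coeff p = 1 \<and> (\<forall>i. coeff p i \<in> D)
       \<and> poly p x = 0 \<longrightarrow> x \<in> D)"

definition dedekind_domain_in :: "'k::field set \<Rightarrow> bool" where
  "dedekind_domain_in D \<longleftrightarrow> subring_of D \<and> is_frac_field_of D \<and> noetherian_of D \<and>
     integrally_closed_in D \<and>
     (\<forall>P. prime_ideal_of D P \<and> P \<noteq> {0} \<longrightarrow> maximal_ideal_of D P)"

text \<open>The ambient ring B plays the role of K \<otimes>_D A; \<iota> : K \<rightarrow> B is the structure map.
  Evaluation of f \<in> K[X] at b \<in> B.\<close>
definition peval :: "('k::comm_ring_1 \<Rightarrow> 'b::ring_1) \<Rightarrow> 'k poly \<Rightarrow> 'b \<Rightarrow> 'b" where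
  "peval \<iota> f b = (\<Sum>i\<le>degree f. \<iota> (coeff f i) * b ^ i)"

definition IntK :: "('k::comm_ring_1 \<Rightarrow> 'b::ring_1) \<Rightarrow> 'b set \<Rightarrow> 'k poly set" where
  "IntK \<iota> A = {f. \<forall>a\<in>A. peval \<iota> f a \<in> A}"

definition polys_over :: "'k::comm_ring_1 set \<Rightarrow> 'k poly set" where
  "polys_over D = {f. \<forall>i. coeff f i \<in> D}"

inductive_set ext_ideal :: "('k::comm_ring_1 \<Rightarrow> 'b::ring_1) \<Rightarrow> 'k set \<Rightarrow> 'b set \<Rightarrow> 'b set"
  for \<iota> P A where
  zero: "0 \<in> ext_ideal \<iota> P A"
| gen: "p \<in> P \<Longrightarrow> a \<in> A \<Longrightarrow> \<iota> p * a \<in> ext_ideal \<iota> P A"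
| add: "x \<in> ext_ideal \<iota> P A \<Longrightarrow> y \<in> ext_ideal \<iota> P A \<Longrightarrow> x + y \<in> ext_ideal \<iota> P A"

definition finite_quotient :: "'k::comm_ring_1 set \<Rightarrow> 'k set \<Rightarrow> bool" where
  "finite_quotient D P \<longleftrightarrow> finite ((\<lambda>a. (\<lambda>p. a + p) ` P) ` D)"

text \<open>A/PA is an algebraic D/P-algebra of bounded degree, unfolded through lifts:
  a polynomial over D/P of degree \<le> n is the reduction of a polynomial g over D of
  degree \<le> n; it is nonzero iff some coefficient of g lies outside P; it vanishes at
  the class of a iff g(a) \<in> PA.\<close>
definition alg_bounded_degree_mod ::
    "('k::comm_ring_1 \<Rightarrow> 'b::ring_1) \<Rightarrow> 'k set \<Rightarrow> 'k set \<Rightarrow> 'b set \<Rightarrow> bool" where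
  "alg_bounded_degree_mod \<iota> D P A \<longleftrightarrow> (\<exists>n::nat. \<forall>a\<in>A. \<exists>g. g \<in> polys_over D \<and>
      degree g \<le> n \<and> (\<exists>i. coeff g i \<notin> P) \<and> peval \<iota> g a \<in> ext_ideal \<iota> P A)"

end

theory Submission imports Defs "HOL-Library.FuncSet" begin

locale dd = fixes D :: "'k::field set" assumes ded: "dedekind_domain_in D"
begin

lemma subr: "subring_of D" using ded by (simp add: dedekind_domain_in_def)
lemma zeroD[simp]: "0 \<in> D" and oneD[simp]: "1 \<in> D" using subr by (auto simp: subring_of_def)
lemma addD: "x \<in> D \<Longrightarrow> y \<in> D \<Longrightarrow> x + y \<in> D" using subr by (auto simp: subring_of_def)
lemma diffD: "x \<in> D \<Longrightarrow> y \<in> D \<Longrightarrow> x - y \<in> D" using subr by (auto simp: subring_of_def)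
lemma mulD: "x \<in> D \<Longrightarrow> y \<in> D \<Longrightarrow> x * y \<in> D" using subr by (auto simp: subring_of_def)
lemma negD: "x \<in> D \<Longrightarrow> - x \<in> D" using diffD[of 0 x] by simp
lemma sumD: "(\<And>i. i \<in> S \<Longrightarrow> f i \<in> D) \<Longrightarrow> sum f S \<in> D"
  by (induction S rule: infinite_finite_induct) (auto intro: addD)
lemma powD: "x \<in> D \<Longrightarrow> x ^ n \<in> D"
  by (induction n) (auto intro: mulD)
lemma noeth: "noetherian_of D" using ded by (simp add: dedekind_domain_in_def)
lemma intcl: "integrally_closed_in D" using ded by (simp add: dedekind_domain_in_def)
lemma fracf: "is_frac_field_of D" using ded by (simp add: dedekind_domain_in_def)
lemma primemax: "prime_ideal_of D P \<Longrightarrow> P \<noteq> {0} \<Longrightarrow> maximal_ideal_of D P"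
  using ded by (simp add: dedekind_domain_in_def)

lemma idsub: "ideal_of D I \<Longrightarrow> x \<in> I \<Longrightarrow> x \<in> D" by (auto simp: ideal_of_def)
lemma id0: "ideal_of D I \<Longrightarrow> 0 \<in> I" by (auto simp: ideal_of_def)
lemma idadd: "ideal_of D I \<Longrightarrow> x \<in> I \<Longrightarrow> y \<in> I \<Longrightarrow> x + y \<in> I" by (auto simp: ideal_of_def)
lemma idmul: "ideal_of D I \<Longrightarrow> r \<in> D \<Longrightarrow> x \<in> I \<Longrightarrow> r * x \<in> I" by (auto simp: ideal_of_def)
lemma idmulr: "ideal_of D I \<Longrightarrow> r \<in> D \<Longrightarrow> x \<in> I \<Longrightarrow> x * r \<in> I" using idmul by (simp add: mult.commute)
lemma idneg: "ideal_of D I \<Longrightarrow> x \<in> I \<Longrightarrow> - x \<in> I"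
  using idmul[of I "-1" x] negD[of 1] by simp
lemma iddiff: "ideal_of D I \<Longrightarrow> x \<in> I \<Longrightarrow> y \<in> I \<Longrightarrow> x - y \<in> I"
  using idadd[of I x "-y"] idneg by simp
lemma idsum: "ideal_of D I \<Longrightarrow> (\<And>i. i \<in> S \<Longrightarrow> f i \<in> I) \<Longrightarrow> sum f S \<in> I"
  by (induction S rule: infinite_finite_induct) (auto intro: idadd id0)
lemma id_one: "ideal_of D I \<Longrightarrow> 1 \<in> I \<Longrightarrow> I = D"
  using idmul[of I _ 1] idsub by auto

lemma finite_stage:
  assumes mono: "\<And>i. f i \<subseteq> f (Suc i)" and G: "finite G" "\<forall>g\<in>G. \<exists>i. g \<in> f i"
  shows "\<exists>N. G \<subseteq> f N"
  using G
proof (induction G rule: finite_induct)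
  case empty then show ?case by auto
next
  case (insert g F)
  then obtain N where N: "F \<subseteq> f N" by auto
  obtain i where i: "g \<in> f i" using insert by auto
  have "f N \<subseteq> f (max N i)" "f i \<subseteq> f (max N i)"
    using lift_Suc_mono_le[of f, OF mono] by auto
  then show ?case using N i by blast
qed

lemma no_chain: "\<not> (\<forall>i. ideal_of D (f i) \<and> f i \<subset> f (Suc i))"
proof
  assume ch: "\<forall>i. ideal_of D (f i) \<and> f i \<subset> f (Suc i)"
  have mono: "\<And>i. f i \<subseteq> f (Suc i)" using ch by auto
  have le: "i \<le> j \<Longrightarrow> f i \<subseteq> f j" for i j using lift_Suc_mono_le[of f, OF mono] by auto
  define U where "U = \<Union>(range f)"
  have idU: "ideal_of D U"
    unfolding ideal_of_def
  proof (intro conjI ballI)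
    show "U \<subseteq> D" using ch idsub unfolding U_def by (meson UN_E subsetI)
    show "0 \<in> U" using ch[rule_format, of 0] id0[of "f 0"] unfolding U_def by auto
    fix x y assume "x \<in> U" "y \<in> U"
    then obtain i j where "x \<in> f i" "y \<in> f j" unfolding U_def by auto
    then have "x \<in> f (max i j)" "y \<in> f (max i j)" using le[of i "max i j"] le[of j "max i j"] by auto
    then have "x + y \<in> f (max i j)" using ch idadd by blast
    then show "x + y \<in> U" unfolding U_def by auto
  next
    fix r x assume "r \<in> D" "x \<in> U"
    then obtain i where "x \<in> f i" unfolding U_def by auto
    then have "r * x \<in> f i" using ch idmul \<open>r \<in> D\<close> by blast
    then show "r * x \<in> U" unfolding U_def by auto
  qed
  from noeth[unfolded noetherian_of_def, rule_format, OF idU]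
  obtain G where G: "finite G" "G \<subseteq> D" "U = {\<Sum>g\<in>G. c g * g | c. \<forall>g\<in>G. c g \<in> D}"
    by (elim exE conjE) simp
  have "g \<in> U" if "g \<in> G" for g
  proof -
    let ?c = "\<lambda>h. if h = g then 1 else (0::'k)"
    have "(\<Sum>h\<in>G. ?c h * h) = (\<Sum>h\<in>G. if h = g then h else 0)"
      by (rule sum.cong) auto
    also have "\<dots> = g" using that G(1) by (simp add: sum.delta)
    finally have "(\<Sum>h\<in>G. ?c h * h) = g" .
    moreover have "\<forall>h\<in>G. ?c h \<in> D" by simp
    ultimately have "\<exists>c. g = (\<Sum>h\<in>G. c h * h) \<and> (\<forall>h\<in>G. c h \<in> D)" by (intro exI[of _ ?c]) simp
    then show ?thesis unfolding G(3) by simp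
  qed
  then have "\<forall>g\<in>G. \<exists>i. g \<in> f i" unfolding U_def by auto
  then obtain N where N: "G \<subseteq> f N" using finite_stage[of f G, OF mono G(1)] by blast
  have "U \<subseteq> f N"
  proof
    fix x assume "x \<in> U"
    then obtain c where "x = (\<Sum>g\<in>G. c g * g)" "\<forall>g\<in>G. c g \<in> D" unfolding G(3) by auto
    moreover have "c g * g \<in> f N" if "g \<in> G" for g
      using idmul[of "f N" "c g" g] ch N that \<open>\<forall>g\<in>G. c g \<in> D\<close> by blast
    ultimately show "x \<in> f N" using idsum[of "f N" G] ch by simp
  qed
  moreover have "f (Suc N) \<subseteq> U" unfolding U_def by auto
  ultimately have "f (Suc N) \<subseteq> f N" by blast
  then show False using ch[rule_format, of N] by blast
qed

definition idrel where "idrel = {(J, I). ideal_of D I \<and> ideal_of D J \<and> I \<subset> J}"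

lemma wf_idrel: "wf idrel"
  unfolding wf_iff_no_infinite_down_chain
proof
  assume "\<exists>f. \<forall>i. (f (Suc i), f i) \<in> idrel"
  then obtain f where "\<forall>i. (f (Suc i), f i) \<in> idrel" by blast
  then have "\<forall>i. ideal_of D (f i) \<and> f i \<subset> f (Suc i)" by (auto simp: idrel_def)
  then show False by (rule notE[OF no_chain])
qed


definition gen where "gen I a = {i + r * a | i r. i \<in> I \<and> r \<in> D}"

lemma gen_ideal: assumes "ideal_of D I" "a \<in> D" shows "ideal_of D (gen I a)"
  unfolding ideal_of_def
proof (intro conjI ballI)
  show "gen I a \<subseteq> D" using assms by (auto simp: gen_def intro!: addD mulD dest: idsub)
  have "0 + 0 * a \<in> gen I a" unfolding gen_def using id0[OF assms(1)] zeroD by blast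
  then show "0 \<in> gen I a" by simp
  fix x y assume "x \<in> gen I a" "y \<in> gen I a"
  then obtain i r j s where xy: "x = i + r * a" "y = j + s * a" "i \<in> I" "j \<in> I" "r \<in> D" "s \<in> D"
    unfolding gen_def by blast
  then have "x + y = (i + j) + (r + s) * a" by (simp add: algebra_simps)
  moreover have "i + j \<in> I" "r + s \<in> D" using xy assms by (auto intro: idadd addD)
  ultimately show "x + y \<in> gen I a" unfolding gen_def by blast
next
  fix r x assume r: "r \<in> D" and "x \<in> gen I a"
  then obtain i s where xy: "x = i + s * a" "i \<in> I" "s \<in> D"
    unfolding gen_def by blast
  then have "r * x = r * i + (r * s) * a" by (simp add: algebra_simps)
  moreover have "r * i \<in> I" "r * s \<in> D" using xy assms r by (auto intro: idmul mulD)
  ultimately show "r * x \<in> gen I a" unfolding gen_def by blast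
qed

lemma gen_sub: "ideal_of D I \<Longrightarrow> I \<subseteq> gen I a"
proof
  fix x assume "x \<in> I"
  then have "x = x + 0 * a \<and> x \<in> I \<and> (0::'k) \<in> D" by simp
  then show "x \<in> gen I a" unfolding gen_def by blast
qed

lemma gen_a: "ideal_of D I \<Longrightarrow> a \<in> gen I a"
proof -
  assume "ideal_of D I"
  then have "a = 0 + 1 * a \<and> 0 \<in> I \<and> (1::'k) \<in> D" using id0 by simp
  then show "a \<in> gen I a" unfolding gen_def by blast
qed

lemma ideal0: "ideal_of D {0}" by (auto simp: ideal_of_def)

lemma gen0: "x \<in> gen {0} a \<longleftrightarrow> (\<exists>r\<in>D. x = r * a)"
  unfolding gen_def by auto

lemma max_prime: assumes "maximal_ideal_of D M" shows "prime_ideal_of D M"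
  unfolding prime_ideal_of_def
proof (intro conjI ballI impI)
  show M: "ideal_of D M" "M \<noteq> D" using assms by (auto simp: maximal_ideal_of_def)
  fix a b assume ab: "a \<in> D" "b \<in> D" "a * b \<in> M"
  show "a \<in> M \<or> b \<in> M"
  proof (cases "a \<in> M")
    case False
    have "gen M a = D"
    proof -
      have "gen M a = M \<or> gen M a = D"
        using assms gen_ideal[OF M(1) ab(1)] gen_sub[OF M(1)] unfolding maximal_ideal_of_def by blast
      then show ?thesis using gen_a[OF M(1), of a] False by blast
    qed
    then have "1 \<in> gen M a" by simp
    then obtain m r where mr: "1 = m + r * a" "m \<in> M" "r \<in> D" unfolding gen_def by blast
    then have "b = b * m + r * (a * b)" by (metis mult.commute mult.left_commute distrib_left mult_1_right)
    moreover have "b * m \<in> M" "r * (a * b) \<in> M" using mr ab M by (auto intro: idmul idmulr)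
    ultimately show ?thesis using idadd[OF M(1)] by metis
  qed simp
qed

lemma exists_max: "ideal_of D I \<Longrightarrow> I \<noteq> D \<Longrightarrow> \<exists>M. maximal_ideal_of D M \<and> I \<subseteq> M"
proof (induction I rule: wf_induct_rule[OF wf_idrel])
  case (1 I)
  show ?case
  proof (cases "maximal_ideal_of D I")
    case True then show ?thesis by blast
  next
    case False
    then obtain J where J: "ideal_of D J" "I \<subseteq> J" "J \<noteq> I" "J \<noteq> D"
      using 1(2,3) unfolding maximal_ideal_of_def by blast
    then have "(J, I) \<in> idrel" using 1(2) unfolding idrel_def by auto
    then obtain M where "maximal_ideal_of D M" "J \<subseteq> M" using 1(1) J by blast
    then show ?thesis using J by blast
  qed
qed


definition prodin where "prodin Ps I \<longleftrightarrow> (\<forall>xs. list_all2 (\<in>) xs Ps \<longrightarrow> prod_list xs \<in> I)"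
definition NP where "NP Ps \<longleftrightarrow> (\<forall>Q\<in>set Ps. prime_ideal_of D Q \<and> Q \<noteq> {0})"

lemma prodin_append:
  assumes I: "ideal_of D I" and a: "a \<in> D" "b \<in> D" "a * b \<in> I"
    and pa: "prodin Pa (gen I a)" and pb: "prodin Pb (gen I b)"
  shows "prodin (Pa @ Pb) I"
  unfolding prodin_def
proof (intro allI impI)
  fix xs assume "list_all2 (\<in>) xs (Pa @ Pb)"
  then obtain us vs where uv: "xs = us @ vs" "list_all2 (\<in>) us Pa" "list_all2 (\<in>) vs Pb"
    by (auto simp: list_all2_append2)
  have "prod_list us \<in> gen I a" using pa uv unfolding prodin_def by blast
  then obtain i r where ir: "prod_list us = i + r * a" "i \<in> I" "r \<in> D" unfolding gen_def by blast
  have "prod_list vs \<in> gen I b" using pb uv unfolding prodin_def by blast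
  then obtain j s where js: "prod_list vs = j + s * b" "j \<in> I" "s \<in> D" unfolding gen_def by blast
  have "prod_list xs = i * (j + s * b) + (r * a) * j + (r * s) * (a * b)"
    using ir js uv by (simp add: algebra_simps)
  moreover have "j + s * b \<in> D" "r * a \<in> D" "r * s \<in> D" using js ir a I by (auto intro: addD mulD idsub)
  then have "i * (j + s * b) \<in> I" "(r * a) * j \<in> I" "(r * s) * (a * b) \<in> I"
    using ir js a I by (auto intro: idmul idmulr)
  ultimately show "prod_list xs \<in> I" using I by (auto intro: idadd)
qed

lemma prime_products: "ideal_of D I \<Longrightarrow> I \<noteq> {0} \<Longrightarrow> \<exists>Ps. NP Ps \<and> prodin Ps I"
proof (induction I rule: wf_induct_rule[OF wf_idrel])
  case (1 I)
  show ?case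
  proof (cases "I = D")
    case True
    have "prodin [] I" unfolding prodin_def True by simp
    then show ?thesis unfolding NP_def by (intro exI[of _ "[]"]) simp
  next
    case ID: False
    show ?thesis
    proof (cases "prime_ideal_of D I")
      case True
      have "prodin [I] I" unfolding prodin_def by (auto simp: list_all2_Cons2)
      then show ?thesis using True 1(3) unfolding NP_def by (intro exI[of _ "[I]"]) simp
    next
      case False
      then obtain a b where ab: "a \<in> D" "b \<in> D" "a * b \<in> I" "a \<notin> I" "b \<notin> I"
        using 1(2) ID unfolding prime_ideal_of_def by blast
      have ga: "ideal_of D (gen I a)" "I \<subset> gen I a"
        using gen_ideal[OF 1(2) ab(1)] gen_sub[OF 1(2)] gen_a[OF 1(2), of a] ab by auto
      have gb: "ideal_of D (gen I b)" "I \<subset> gen I b"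
        using gen_ideal[OF 1(2) ab(2)] gen_sub[OF 1(2)] gen_a[OF 1(2), of b] ab by auto
      have "(gen I a, I) \<in> idrel" "(gen I b, I) \<in> idrel" using ga gb 1(2) unfolding idrel_def by auto
      moreover have "gen I a \<noteq> {0}" "gen I b \<noteq> {0}" using ga gb 1(3) id0[OF 1(2)] by auto
      ultimately obtain Pa Pb where "NP Pa" "prodin Pa (gen I a)" "NP Pb" "prodin Pb (gen I b)"
        using 1(1) ga(1) gb(1) by meson
      then have "NP (Pa @ Pb)" "prodin (Pa @ Pb) I"
        using prodin_append[OF 1(2) ab(1-3)] unfolding NP_def by auto
      then show ?thesis by blast
    qed
  qed
qed

lemma prod_notin:
  assumes P: "prime_ideal_of D P" and xs: "\<forall>x\<in>set xs. x \<in> D \<and> x \<notin> P"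
  shows "prod_list xs \<notin> P \<and> prod_list xs \<in> D"
  using xs
proof (induction xs)
  case Nil
  have "1 \<notin> P" using P id_one unfolding prime_ideal_of_def by blast
  then show ?case by simp
next
  case (Cons x xs)
  then show ?case using P unfolding prime_ideal_of_def by (auto intro: mulD)
qed

lemma list_all2_D: "list_all2 (\<in>) ys Ps \<Longrightarrow> NP Ps \<Longrightarrow> prod_list ys \<in> D"
proof (induction ys Ps rule: list_all2_induct)
  case Nil then show ?case by simp
next
  case (Cons x xs y ys)
  then have "x \<in> D" unfolding NP_def prime_ideal_of_def using idsub by auto
  moreover have "NP ys" using Cons unfolding NP_def by auto
  ultimately show ?case using Cons by (auto intro: mulD)
qed

lemma inverse_elem:
  assumes P: "prime_ideal_of D P" "P \<noteq> {0}"
  shows "\<exists>t. t \<notin> D \<and> (\<forall>p\<in>P. t * p \<in> D)"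
proof -
  have PI: "ideal_of D P" "P \<noteq> D" using P unfolding prime_ideal_of_def by auto
  obtain a where a: "a \<in> P" "a \<noteq> 0" using P(2) id0[OF PI(1)] by blast
  have aD: "a \<in> D" using a PI idsub by auto
  define Da where "Da = gen {0} a"
  have Da: "ideal_of D Da" "Da \<noteq> {0}" "a \<in> Da"
    using gen_ideal[OF ideal0 aD] gen_a[OF ideal0, of a] a unfolding Da_def by auto
  have DaP: "Da \<subseteq> P" using a(1) idmul[OF PI(1)] by (auto simp: Da_def gen0)
  have "\<exists>n Ps. length Ps = n \<and> NP Ps \<and> prodin Ps Da" using prime_products[OF Da(1,2)] by blast
  then obtain n where n: "\<exists>Ps. length Ps = n \<and> NP Ps \<and> prodin Ps Da"
    and nmin: "\<forall>m<n. \<not> (\<exists>Ps. length Ps = m \<and> NP Ps \<and> prodin Ps Da)"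
    using exists_least_iff[of "\<lambda>n. \<exists>Ps. length Ps = n \<and> NP Ps \<and> prodin Ps Da"] by blast
  then obtain Ps where Ps: "length Ps = n" "NP Ps" "prodin Ps Da" by blast
  have "\<exists>Q\<in>set Ps. Q \<subseteq> P"
  proof (rule ccontr)
    assume "\<not> ?thesis"
    then have ex: "\<forall>Q\<in>set Ps. \<exists>x. x \<in> Q \<and> x \<notin> P" by blast
    define xs where "xs = map (\<lambda>Q. SOME x. x \<in> Q \<and> x \<notin> P) Ps"
    have sx: "(SOME x. x \<in> Q \<and> x \<notin> P) \<in> Q \<and> (SOME x. x \<in> Q \<and> x \<notin> P) \<notin> P" if "Q \<in> set Ps" for Q
      using someI_ex[OF ex[rule_format, OF that]] .
    have "list_all2 (\<in>) xs Ps" unfolding xs_def list_all2_map1 using sx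
      by (simp add: list_all2_same)
    then have "prod_list xs \<in> Da" using Ps(3) unfolding prodin_def by blast
    moreover have "\<forall>x\<in>set xs. x \<in> D \<and> x \<notin> P" unfolding xs_def using sx Ps(2)
      unfolding NP_def prime_ideal_of_def using idsub by fastforce
    ultimately show False using prod_notin[OF P(1)] DaP by blast
  qed
  then obtain Q where Q: "Q \<in> set Ps" "Q \<subseteq> P" by blast
  have "maximal_ideal_of D Q" using Ps(2) Q(1) primemax unfolding NP_def by blast
  then have QP: "Q = P" using Q(2) PI unfolding maximal_ideal_of_def by blast
  obtain Ps1 Ps2 where sp: "Ps = Ps1 @ P # Ps2" using split_list[OF Q(1)] QP by blast
  have "NP (Ps1 @ Ps2)" using Ps(2) sp unfolding NP_def by auto
  moreover have "length (Ps1 @ Ps2) < n" using sp Ps(1) by simp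
  ultimately have "\<not> prodin (Ps1 @ Ps2) Da" using nmin by blast
  then obtain ys where ys: "list_all2 (\<in>) ys (Ps1 @ Ps2)" "prod_list ys \<notin> Da"
    unfolding prodin_def by blast
  define b where "b = prod_list ys"
  have bD: "b \<in> D" using list_all2_D[OF ys(1) \<open>NP (Ps1 @ Ps2)\<close>] unfolding b_def .
  obtain us vs where uv: "ys = us @ vs" "list_all2 (\<in>) us Ps1" "list_all2 (\<in>) vs Ps2"
    using ys(1) by (auto simp: list_all2_append2)
  show ?thesis
  proof (intro exI[of _ "b / a"] conjI ballI)
    show "b / a \<notin> D"
    proof
      assume "b / a \<in> D"
      then have "b \<in> Da" unfolding Da_def gen0 using a(2) by (intro bexI[of _ "b / a"]) auto
      then show False using ys(2) b_def by simp
    qed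
  next
    fix p assume p: "p \<in> P"
    have "list_all2 (\<in>) (us @ p # vs) Ps" using uv sp p by (simp add: list_all2_appendI)
    then have "prod_list (us @ p # vs) \<in> Da" using Ps(3) unfolding prodin_def by blast
    then obtain r where r: "r \<in> D" "prod_list (us @ p # vs) = r * a" unfolding Da_def gen0 by blast
    have "b * p = r * a" using r(2) uv(1) unfolding b_def by (simp add: algebra_simps)
    then have "b / a * p = r" using a(2) by (simp add: field_simps)
    then show "b / a * p \<in> D" using r by simp
  qed
qed


lemma integral_in_D:
  assumes cD: "\<And>i. c i \<in> D" and eq: "t ^ Suc k = (\<Sum>i\<le>k. c i * t ^ i)"
  shows "t \<in> D"
proof -
  define q where "q = (\<Sum>i\<le>k. monom (c i) i)"
  define p where "p = monom 1 (Suc k) - q"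
  have dq: "degree q \<le> k" unfolding q_def
    by (rule degree_sum_le) (auto intro: order.trans[OF degree_monom_le])
  have cq: "coeff q j = (if j \<le> k then c j else 0)" for j
    unfolding q_def by (simp add: coeff_sum coeff_monom)
  have dp: "degree p = Suc k" unfolding p_def using dq
    by (simp only: diff_conv_add_uminus, subst degree_add_eq_left) (simp_all add: degree_monom_eq)
  have "lead_coeff p = 1" using dp unfolding p_def using dq by (simp add: coeff_monom coeff_eq_0)
  moreover have "coeff p j \<in> D" for j
    unfolding p_def using cD by (simp add: coeff_monom cq diffD negD)
  moreover have "poly p t = 0"
    unfolding p_def q_def using eq by (simp add: poly_sum poly_monom)
  ultimately show ?thesis using intcl unfolding integrally_closed_in_def by blast
qed

lemma stable_integral:
  assumes J: "ideal_of D J" "J \<noteq> {0}" and st: "\<And>x. x \<in> J \<Longrightarrow> t * x \<in> J"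
  shows "t \<in> D"
proof -
  obtain d where d: "d \<in> J" "d \<noteq> 0" using J id0 by blast
  have pw: "t ^ k * d \<in> J" for k
    by (induction k) (use d st in \<open>auto simp: mult.assoc\<close>)
  define I where "I k = {\<Sum>i\<le>k. c i * (t ^ i * d) | c. \<forall>i. c i \<in> D}" for k
  have memI: "x \<in> I k" if "x = (\<Sum>i\<le>k. c i * (t ^ i * d)) \<and> (\<forall>i. c i \<in> D)" for x k c
    unfolding I_def using that by (intro CollectI exI[of _ c]) simp
  have Iid: "ideal_of D (I k)" for k
    unfolding ideal_of_def
  proof (intro conjI ballI)
    show "I k \<subseteq> D"
    proof
      fix x assume "x \<in> I k"
      then obtain c where "x = (\<Sum>i\<le>k. c i * (t ^ i * d))" "\<forall>i. c i \<in> D" unfolding I_def by blast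
      then have "x \<in> J" by (auto intro!: idsum[OF J(1)] idmul[OF J(1)] pw)
      then show "x \<in> D" using idsub[OF J(1)] by simp
    qed
    show "0 \<in> I k" by (rule memI[where c="\<lambda>_. 0"]) simp
    fix x y assume "x \<in> I k" "y \<in> I k"
    then obtain c e where ce: "x = (\<Sum>i\<le>k. c i * (t ^ i * d))" "\<forall>i. c i \<in> D"
      "y = (\<Sum>i\<le>k. e i * (t ^ i * d))" "\<forall>i. e i \<in> D" unfolding I_def by blast
    then have "x + y = (\<Sum>i\<le>k. (\<lambda>i. c i + e i) i * (t ^ i * d)) \<and> (\<forall>i. (\<lambda>i. c i + e i) i \<in> D)"
      by (simp add: sum.distrib algebra_simps addD)
    then show "x + y \<in> I k" by (rule memI)
  next
    fix r x assume r: "r \<in> D" and "x \<in> I k"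
    then obtain c where ce: "x = (\<Sum>i\<le>k. c i * (t ^ i * d))" "\<forall>i. c i \<in> D" unfolding I_def by blast
    then have "r * x = (\<Sum>i\<le>k. (\<lambda>i. r * c i) i * (t ^ i * d)) \<and> (\<forall>i. (\<lambda>i. r * c i) i \<in> D)"
      using r by (simp add: sum_distrib_left algebra_simps mulD)
    then show "r * x \<in> I k" by (rule memI)
  qed
  have mono: "I k \<subseteq> I (Suc k)" for k
  proof
    fix x assume "x \<in> I k"
    then obtain c where ce: "x = (\<Sum>i\<le>k. c i * (t ^ i * d))" "\<forall>i. c i \<in> D" unfolding I_def by blast
    define c' where "c' i = (if i \<le> k then c i else 0)" for i
    have "x = (\<Sum>i\<le>Suc k. c' i * (t ^ i * d)) \<and> (\<forall>i. c' i \<in> D)"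
      using ce unfolding c'_def by (auto intro!: sum.cong)
    then show "x \<in> I (Suc k)" by (rule memI)
  qed
  obtain k where "\<not> (ideal_of D (I k) \<and> I k \<subset> I (Suc k))" using no_chain[of I] by blast
  then have eqI: "I (Suc k) \<subseteq> I k" using Iid mono by blast
  define c1 where "c1 i = (if i = Suc k then 1 else (0::'k))" for i
  have "(\<Sum>i\<le>Suc k. c1 i * (t ^ i * d)) = t ^ Suc k * d"
    unfolding c1_def by (simp add: if_distrib sum.delta cong: if_cong)
  moreover have "\<forall>i. c1 i \<in> D" unfolding c1_def by simp
  ultimately have "t ^ Suc k * d \<in> I (Suc k)" by (intro memI[where c=c1]) simp
  then have "t ^ Suc k * d \<in> I k" using eqI by blast
  then obtain c where ce: "t ^ Suc k * d = (\<Sum>i\<le>k. c i * (t ^ i * d))" "\<forall>i. c i \<in> D" unfolding I_def by blast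
  moreover have "(\<Sum>i\<le>k. c i * (t ^ i * d)) = (\<Sum>i\<le>k. c i * t ^ i) * d"
    by (simp add: sum_distrib_right mult.assoc)
  ultimately have "t ^ Suc k * d = (\<Sum>i\<le>k. c i * t ^ i) * d" by simp
  then have "t ^ Suc k = (\<Sum>i\<le>k. c i * t ^ i)" using d(2) by simp
  then show ?thesis using integral_in_D ce(2) by blast
qed


lemma polys_D: "h \<in> polys_over D \<Longrightarrow> coeff h i \<in> D" by (simp add: polys_over_def)

lemma poly_D: "h \<in> polys_over D \<Longrightarrow> x \<in> D \<Longrightarrow> poly h x \<in> D"
  unfolding poly_altdef by (auto intro!: sumD mulD powD polys_D)

lemma pCons_polys: "pCons a p \<in> polys_over D \<longleftrightarrow> a \<in> D \<and> p \<in> polys_over D"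
proof
  assume h: "pCons a p \<in> polys_over D"
  have "a \<in> D" using polys_D[OF h, of 0] by simp
  moreover have "coeff p i \<in> D" for i using polys_D[OF h, of "Suc i"] by simp
  ultimately show "a \<in> D \<and> p \<in> polys_over D" by (simp add: polys_over_def)
next
  assume "a \<in> D \<and> p \<in> polys_over D"
  then show "pCons a p \<in> polys_over D" by (auto simp: polys_over_def coeff_pCons split: nat.split)
qed

lemma synth_D: "h \<in> polys_over D \<Longrightarrow> c \<in> D \<Longrightarrow> synthetic_div h c \<in> polys_over D"
proof (induction h rule: pCons_induct)
  case 0 then show ?case by (simp add: polys_over_def)
next
  case (pCons a p)
  then show ?case by (simp add: pCons_polys poly_D)
qed

lemma mult_polys: "p \<in> polys_over D \<Longrightarrow> q \<in> polys_over D \<Longrightarrow> p * q \<in> polys_over D"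
  by (auto simp: polys_over_def coeff_mult intro!: sumD mulD)

lemma one_polys: "1 \<in> polys_over D"
  by (auto simp: polys_over_def coeff_1)

lemma prime_notin:
  assumes P: "prime_ideal_of D P" and a: "a \<in> D" "a \<notin> P" and b: "b \<in> D" "b \<notin> P"
  shows "a * b \<notin> P"
  using assms unfolding prime_ideal_of_def by blast

lemma roots_bound:
  assumes P: "prime_ideal_of D P"
  shows "degree h = n \<Longrightarrow> h \<in> polys_over D \<Longrightarrow> (\<exists>i. coeff h i \<notin> P) \<Longrightarrow> finite S \<Longrightarrow> S \<subseteq> D \<Longrightarrow>
    (\<forall>x\<in>S. \<forall>y\<in>S. x \<noteq> y \<longrightarrow> x - y \<notin> P) \<Longrightarrow> (\<forall>x\<in>S. poly h x \<in> P) \<Longrightarrow> card S \<le> n"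
proof (induction n arbitrary: h S rule: less_induct)
  case (less n)
  have PI: "ideal_of D P" using P unfolding prime_ideal_of_def by simp
  show ?case
  proof (cases "S = {}")
    case True then show ?thesis by simp
  next
    case False
    then obtain d where d: "d \<in> S" by blast
    have dD: "d \<in> D" using d less by auto
    define q where "q = synthetic_div h d"
    have hq: "h = [:-d, 1:] * q + [:poly h d:]" unfolding q_def by (rule synthetic_div_correct'[symmetric])
    have qD: "q \<in> polys_over D" unfolding q_def using synth_D less dD by simp
    have n0: "n \<noteq> 0"
    proof
      assume "n = 0"
      then have "coeff h i \<in> P" for i
      proof (cases i)
        case 0
        have "poly h d = coeff h 0" using \<open>n = 0\<close> less(2) by (simp add: poly_altdef)
        then show ?thesis using 0 less d by auto
      next
        case (Suc j) then show ?thesis using \<open>n = 0\<close> less(2) coeff_eq_0[of h i] id0[OF PI] by simp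
      qed
      then show False using less(4) by blast
    qed
    have cq: "\<exists>i. coeff q i \<notin> P"
    proof (rule ccontr)
      assume "\<not> ?thesis"
      then have qP: "coeff q i \<in> P" for i by blast
      have "coeff h i \<in> P" for i
      proof -
        have e: "coeff h i = - d * coeff q i + (case i of 0 \<Rightarrow> 0 | Suc j \<Rightarrow> coeff q j) + (if i = 0 then poly h d else 0)"
          by (subst hq) (simp add: mult_pCons_left coeff_pCons split: nat.split)
        have "- d * coeff q i \<in> P" using idmul[OF PI negD[OF dD] qP] .
        moreover have "(case i of 0 \<Rightarrow> 0 | Suc j \<Rightarrow> coeff q j) \<in> P" using qP id0[OF PI] by (simp split: nat.split)
        moreover have "(if i = 0 then poly h d else 0) \<in> P" using less(8) d id0[OF PI] by simp
        ultimately show ?thesis unfolding e by (intro idadd[OF PI]) 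
      qed
      then show False using less(4) by blast
    qed
    have dq: "degree q = n - 1" unfolding q_def using less(2) by (simp add: degree_synthetic_div)
    have "card (S - {d}) \<le> degree q"
    proof (rule less(1)[OF _ refl qD cq])
      show "degree q < n" using dq n0 by simp
      show "finite (S - {d})" "S - {d} \<subseteq> D" using less by auto
      show "\<forall>x\<in>S - {d}. \<forall>y\<in>S - {d}. x \<noteq> y \<longrightarrow> x - y \<notin> P" using less(7) by blast
      show "\<forall>x\<in>S - {d}. poly q x \<in> P"
      proof
        fix e assume e: "e \<in> S - {d}"
        have eD: "e \<in> D" using e less by auto
        have "poly h e = (e - d) * poly q e + poly h d" by (subst hq) (simp add: algebra_simps)
        then have "(e - d) * poly q e = poly h e - poly h d" by simp
        moreover have "poly h e - poly h d \<in> P" using less(8) e d iddiff[OF PI] by auto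
        ultimately have "(e - d) * poly q e \<in> P" by simp
        moreover have "e - d \<notin> P" using less(7) e d by auto
        ultimately show "poly q e \<in> P"
          using prime_notin[OF P, of "e - d" "poly q e"] diffD[OF eD dD] poly_D[OF qD eD] by blast
      qed
    qed
    moreover have "card S = card (S - {d}) + 1" using d less(5) card_gt_0_iff[of S] by (auto simp: card_Diff_singleton)
    ultimately show ?thesis using dq n0 by simp
  qed
qed

lemma coset_eq:
  assumes PI: "ideal_of D P" and x: "x - y \<in> P"
  shows "(\<lambda>p. x + p) ` P = (\<lambda>p. y + p) ` P"
proof -
  have "(\<lambda>p. x + p) ` P \<subseteq> (\<lambda>p. y + p) ` P" if "x - y \<in> P" for x y
  proof
    fix z assume "z \<in> (\<lambda>p. x + p) ` P"
    then obtain p where p: "p \<in> P" "z = x + p" by blast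
    then have "z = y + ((x - y) + p)" by simp
    moreover have "(x - y) + p \<in> P" using idadd[OF PI that p(1)] .
    ultimately show "z \<in> (\<lambda>p. y + p) ` P" by blast
  qed
  moreover have "y - x \<in> P" using idneg[OF PI x] by simp
  ultimately show ?thesis using x by blast
qed

lemma fq_from_poly:
  assumes P: "prime_ideal_of D P" and h: "h \<in> polys_over D" "\<exists>i. coeff h i \<notin> P"
    and roots: "\<forall>x\<in>D. poly h x \<in> P"
  shows "finite_quotient D P"
  unfolding finite_quotient_def
proof (rule ccontr)
  have PI: "ideal_of D P" using P unfolding prime_ideal_of_def by simp
  define C where "C = (\<lambda>a. (\<lambda>p. a + p) ` P) ` D"
  assume "\<not> finite ((\<lambda>a. (\<lambda>p. a + p) ` P) ` D)"
  then have "infinite C" unfolding C_def .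
  then obtain C' where C': "C' \<subseteq> C" "finite C'" "card C' = degree h + 1"
    using infinite_arbitrarily_large by blast
  define rep where "rep c = (SOME a. a \<in> D \<and> c = (\<lambda>p. a + p) ` P)" for c
  have rep: "rep c \<in> D \<and> c = (\<lambda>p. rep c + p) ` P" if "c \<in> C" for c
  proof -
    have "\<exists>a. a \<in> D \<and> c = (\<lambda>p. a + p) ` P" using that unfolding C_def by blast
    then show ?thesis unfolding rep_def by (rule someI_ex)
  qed
  have inj: "inj_on rep C'"
    by (rule inj_onI) (metis C'(1) rep subsetD)
  define S where "S = rep ` C'"
  have "card S = degree h + 1" unfolding S_def using card_image[OF inj] C' by simp
  moreover have "card S \<le> degree h"
  proof (rule roots_bound[OF P refl h])
    show "finite S" unfolding S_def using C' by simp
    show SD: "S \<subseteq> D" unfolding S_def using rep C' by auto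
    show "\<forall>x\<in>S. poly h x \<in> P" using SD roots by auto
    show "\<forall>x\<in>S. \<forall>y\<in>S. x \<noteq> y \<longrightarrow> x - y \<notin> P"
    proof (intro ballI impI)
      fix x y assume xy: "x \<in> S" "y \<in> S" "x \<noteq> y"
      then obtain c1 c2 where c: "c1 \<in> C'" "c2 \<in> C'" "x = rep c1" "y = rep c2" unfolding S_def by blast
      show "x - y \<notin> P"
      proof
        assume "x - y \<in> P"
        then have "(\<lambda>p. x + p) ` P = (\<lambda>p. y + p) ` P" using coset_eq[OF PI] by blast
        then have "c1 = c2" using rep c C'(1) by (metis subsetD)
        then show False using c xy by simp
      qed
    qed
  qed
  ultimately show False by simp
qed

lemma gauss_modP:
  assumes P: "prime_ideal_of D P" and p: "p \<in> polys_over D" "\<exists>i. coeff p i \<notin> P"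
    and q: "q \<in> polys_over D" "\<exists>j. coeff q j \<notin> P"
  shows "\<exists>k. coeff (p * q) k \<notin> P"
proof -
  have PI: "ideal_of D P" using P unfolding prime_ideal_of_def by simp
  have fin: "finite {i. coeff r i \<notin> P}" for r :: "'k poly"
  proof (rule finite_subset[of _ "{..degree r}"])
    show "{i. coeff r i \<notin> P} \<subseteq> {..degree r}"
    proof
      fix i assume "i \<in> {i. coeff r i \<notin> P}"
      then show "i \<in> {..degree r}" using coeff_eq_0[of r i] id0[OF PI] by (cases "degree r < i") auto
    qed
  qed simp
  define i0 where "i0 = Max {i. coeff p i \<notin> P}"
  define j0 where "j0 = Max {i. coeff q i \<notin> P}"
  have i0: "coeff p i0 \<notin> P" "\<And>i. i0 < i \<Longrightarrow> coeff p i \<in> P"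
    unfolding i0_def using Max_in[OF fin] Max_ge[OF fin] p(2) by (auto simp: not_le[symmetric])
  have j0: "coeff q j0 \<notin> P" "\<And>i. j0 < i \<Longrightarrow> coeff q i \<in> P"
    unfolding j0_def using Max_in[OF fin] Max_ge[OF fin] q(2) by (auto simp: not_le[symmetric])
  define T where "T k = coeff p k * coeff q (i0 + j0 - k)" for k
  have "coeff (p * q) (i0 + j0) = (\<Sum>k\<le>i0+j0. T k)" unfolding T_def by (simp add: coeff_mult)
  also have "\<dots> = T i0 + (\<Sum>k\<in>{..i0+j0} - {i0}. T k)"
    by (subst sum.remove[of _ i0]) auto
  finally have eq: "coeff (p * q) (i0 + j0) = T i0 + (\<Sum>k\<in>{..i0+j0} - {i0}. T k)" .
  have rest: "(\<Sum>k\<in>{..i0+j0} - {i0}. T k) \<in> P"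
  proof (rule idsum[OF PI])
    fix k assume k: "k \<in> {..i0+j0} - {i0}"
    show "T k \<in> P"
    proof (cases "k < i0")
      case True
      then have "coeff q (i0 + j0 - k) \<in> P" using j0(2) by simp
      then show ?thesis unfolding T_def using idmul[OF PI polys_D[OF p(1)]] by blast
    next
      case False
      then have "coeff p k \<in> P" using i0(2) k by simp
      then show ?thesis unfolding T_def using idmulr[OF PI polys_D[OF q(1)]] by blast
    qed
  qed
  have "T i0 \<notin> P" unfolding T_def using prime_notin[OF P polys_D[OF p(1)] i0(1) polys_D[OF q(1)]] j0(1) by simp
  then have "coeff (p * q) (i0 + j0) \<notin> P"
  proof (rule contrapos_nn)
    assume "coeff (p * q) (i0 + j0) \<in> P"
    then have "coeff (p * q) (i0 + j0) - (\<Sum>k\<in>{..i0+j0} - {i0}. T k) \<in> P" using iddiff[OF PI _ rest] by blast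
    then show "T i0 \<in> P" using eq by simp
  qed
  then show ?thesis by blast
qed

end

locale setting = dd D for D :: "'k::field set" +
  fixes A :: "'b::ring_1 set" and \<iota> :: "'k \<Rightarrow> 'b"
  assumes hom_add: "\<And>x y. \<iota> (x + y) = \<iota> x + \<iota> y"
    and hom_mult: "\<And>x y. \<iota> (x * y) = \<iota> x * \<iota> y"
    and hom_one: "\<iota> 1 = 1"
    and central: "\<And>x b. \<iota> x * b = b * \<iota> x"
    and A0: "0 \<in> A" and A1: "1 \<in> A" and Aadd: "\<And>x y. x \<in> A \<Longrightarrow> y \<in> A \<Longrightarrow> x + y \<in> A"
    and Aneg: "\<And>x. x \<in> A \<Longrightarrow> - x \<in> A" and Amul: "\<And>x y. x \<in> A \<Longrightarrow> y \<in> A \<Longrightarrow> x * y \<in> A"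
    and D_in_A: "\<iota> ` D \<subseteq> A"
    and std: "A \<inter> range \<iota> = \<iota> ` D"
begin

lemma i0[simp]: "\<iota> 0 = 0" using hom_add[of 0 0] by simp
lemma ineg: "\<iota> (- x) = - \<iota> x" using minus_unique[of "\<iota> x" "\<iota> (-x)"] hom_add[of x "-x"] by simp
lemma idf: "\<iota> (x - y) = \<iota> x - \<iota> y" using hom_add[of x "-y"] ineg by simp
lemma iinj: assumes "\<iota> x = \<iota> y" shows "x = y"
proof (rule ccontr)
  assume "x \<noteq> y"
  then have "\<iota> ((x - y) * inverse (x - y)) = 1" using hom_one by simp
  moreover have "\<iota> (x - y) = 0" using assms idf by simp
  ultimately show False using hom_mult by simp
qed
lemma isum: "\<iota> (sum f S) = (\<Sum>i\<in>S. \<iota> (f i))"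
  by (induction S rule: infinite_finite_induct) (auto simp: hom_add)
lemma ipow: "\<iota> (x ^ n) = \<iota> x ^ n"
  by (induction n) (auto simp: hom_one hom_mult)

lemma Asum: "(\<And>i. i \<in> S \<Longrightarrow> f i \<in> A) \<Longrightarrow> sum f S \<in> A"
  by (induction S rule: infinite_finite_induct) (auto intro: Aadd A0)
lemma Apow: "x \<in> A \<Longrightarrow> x ^ n \<in> A"
  by (induction n) (auto intro: Amul A1)
lemma iA: "x \<in> D \<Longrightarrow> \<iota> x \<in> A" using D_in_A by auto

lemma peval_bound: assumes "degree f \<le> N"
  shows "peval \<iota> f b = (\<Sum>i\<le>N. \<iota> (coeff f i) * b ^ i)"
  unfolding peval_def using assms
  by (intro sum.mono_neutral_right[symmetric]) (auto simp: coeff_eq_0)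

lemma peval_add: "peval \<iota> (f + g) b = peval \<iota> f b + peval \<iota> g b"
proof -
  define N where "N = max (degree f) (degree g)"
  have "degree (f + g) \<le> N" "degree f \<le> N" "degree g \<le> N"
    unfolding N_def using degree_add_le_max[of f g] by auto
  then show ?thesis by (simp add: peval_bound hom_add distrib_right sum.distrib)
qed

lemma peval_diff: "peval \<iota> (f - g) b = peval \<iota> f b - peval \<iota> g b"
proof -
  define N where "N = max (degree f) (degree g)"
  have "degree (f - g) \<le> N" "degree f \<le> N" "degree g \<le> N"
    unfolding N_def using degree_diff_le_max[of f g] by auto
  then show ?thesis by (simp add: peval_bound idf left_diff_distrib sum_subtractf)
qed

lemma peval_smult: "peval \<iota> (smult c f) b = \<iota> c * peval \<iota> f b"
proof -
  have "degree (smult c f) \<le> degree f" by simp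
  then show ?thesis by (simp add: peval_bound[of _ "degree f"] sum_distrib_left hom_mult mult.assoc)
qed

lemma peval_pCons: "peval \<iota> (pCons c f) b = \<iota> c + b * peval \<iota> f b"
proof -
  have "degree (pCons c f) \<le> Suc (degree f)" by simp
  then have "peval \<iota> (pCons c f) b = (\<Sum>i\<le>Suc (degree f). \<iota> (coeff (pCons c f) i) * b ^ i)"
    by (rule peval_bound)
  also have "\<dots> = \<iota> c + (\<Sum>i\<le>degree f. \<iota> (coeff f i) * b ^ Suc i)"
    by (subst sum.atMost_Suc_shift) simp
  also have "(\<Sum>i\<le>degree f. \<iota> (coeff f i) * b ^ Suc i) = b * peval \<iota> f b"
    unfolding peval_def sum_distrib_left
  proof (rule sum.cong)
    fix i
    show "\<iota> (coeff f i) * b ^ Suc i = b * (\<iota> (coeff f i) * b ^ i)"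
      by (simp add: power_Suc mult.assoc[symmetric] central[of _ b])
  qed simp
  finally show ?thesis .
qed

lemma peval_0[simp]: "peval \<iota> 0 b = 0" by (simp add: peval_def)

lemma peval_mult: "peval \<iota> (f * g) b = peval \<iota> f b * peval \<iota> g b"
proof (induction f rule: pCons_induct)
  case 0 then show ?case by simp
next
  case (pCons c f)
  have "peval \<iota> (pCons c f * g) b = \<iota> c * peval \<iota> g b + b * peval \<iota> (f * g) b"
    by (simp add: mult_pCons_left peval_add peval_smult peval_pCons)
  also have "\<dots> = (\<iota> c + b * peval \<iota> f b) * peval \<iota> g b"
    using pCons.IH by (simp add: distrib_right mult.assoc)
  finally show ?case by (simp add: peval_pCons)
qed

lemma peval_iota: "peval \<iota> f (\<iota> d) = \<iota> (poly f d)"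
  unfolding peval_def poly_altdef by (simp add: isum hom_mult ipow)

lemma peval_A: "f \<in> polys_over D \<Longrightarrow> a \<in> A \<Longrightarrow> peval \<iota> f a \<in> A"
  unfolding peval_def by (auto intro!: Asum Amul Apow iA polys_D)

lemma polys_sub_Int: "polys_over D \<subseteq> IntK \<iota> A"
  unfolding IntK_def using peval_A by auto


abbreviation PA where "PA P \<equiv> ext_ideal \<iota> P A"

lemma PA_sub: "x \<in> PA P \<Longrightarrow> ideal_of D P \<Longrightarrow> x \<in> A"
  by (induction x rule: ext_ideal.induct) (auto intro: A0 Aadd Amul iA idsub)

lemma PA_neg: "x \<in> PA P \<Longrightarrow> - x \<in> PA P"
proof (induction x rule: ext_ideal.induct)
  case zero then show ?case by (simp add: ext_ideal.zero)
next
  case (gen p a)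
  have "- (\<iota> p * a) = \<iota> p * (- a)" by simp
  then show ?case using gen Aneg ext_ideal.gen by metis
next
  case (add x y)
  then show ?case using ext_ideal.add[of "-x" \<iota> P A "-y"] by (simp add: add.commute)
qed

lemma PA_add: "x \<in> PA P \<Longrightarrow> y \<in> PA P \<Longrightarrow> x + y \<in> PA P" by (rule ext_ideal.add)
lemma PA_diff: "x \<in> PA P \<Longrightarrow> y \<in> PA P \<Longrightarrow> x - y \<in> PA P"
  using PA_add[OF _ PA_neg, of x P y] by simp

lemma PA_multR: "x \<in> PA P \<Longrightarrow> y \<in> A \<Longrightarrow> x * y \<in> PA P"
proof (induction x rule: ext_ideal.induct)
  case zero then show ?case by (simp add: ext_ideal.zero)
next
  case (gen p a)
  then show ?case using ext_ideal.gen[of p P "a * y"] Amul by (simp add: mult.assoc)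
next
  case (add x y) then show ?case by (simp add: distrib_right ext_ideal.add)
qed

lemma PA_multL: "x \<in> PA P \<Longrightarrow> y \<in> A \<Longrightarrow> y * x \<in> PA P"
proof (induction x rule: ext_ideal.induct)
  case zero then show ?case by (simp add: ext_ideal.zero)
next
  case (gen p a)
  have "y * (\<iota> p * a) = \<iota> p * (y * a)" by (simp add: mult.assoc[symmetric] central[of p y])
  then show ?case using ext_ideal.gen[of p P "y * a"] Amul gen by simp
next
  case (add x z) then show ?case by (simp add: distrib_left ext_ideal.add)
qed

lemma PA_sum: "(\<And>i. i \<in> S \<Longrightarrow> f i \<in> PA P) \<Longrightarrow> sum f S \<in> PA P"
  by (induction S rule: infinite_finite_induct) (auto intro: ext_ideal.add ext_ideal.zero)

lemma PA_t: "x \<in> PA P \<Longrightarrow> (\<forall>p\<in>P. t * p \<in> D) \<Longrightarrow> \<iota> t * x \<in> A"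
proof (induction x rule: ext_ideal.induct)
  case zero then show ?case by (simp add: A0)
next
  case (gen p a)
  have "\<iota> t * (\<iota> p * a) = \<iota> (t * p) * a" by (simp add: hom_mult mult.assoc)
  then show ?case using gen iA Amul by simp
next
  case (add x y) then show ?case by (simp add: distrib_left Aadd)
qed

lemma peval_PA: "(\<forall>i. coeff f i \<in> P) \<Longrightarrow> a \<in> A \<Longrightarrow> peval \<iota> f a \<in> PA P"
  unfolding peval_def by (auto intro!: PA_sum ext_ideal.gen Apow)

lemma tmul:
  assumes M: "maximal_ideal_of D P" and t: "t \<notin> D" "\<forall>p\<in>P. t * p \<in> D"
    and c: "c \<in> D" "t * c \<in> D"
  shows "c \<in> P"
proof (rule ccontr)
  assume cP: "c \<notin> P"
  have PI: "ideal_of D P" using M unfolding maximal_ideal_of_def by simp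
  define K where "K = {y \<in> D. t * y \<in> D}"
  have K: "ideal_of D K" unfolding ideal_of_def
  proof (intro conjI ballI)
    show "K \<subseteq> D" "0 \<in> K" unfolding K_def by auto
    fix x y assume "x \<in> K" "y \<in> K"
    then show "x + y \<in> K" unfolding K_def by (auto simp: distrib_left intro: addD)
  next
    fix r x assume r: "r \<in> D" and "x \<in> K"
    then have "x \<in> D" "t * x \<in> D" unfolding K_def by auto
    moreover have "t * (r * x) = r * (t * x)" by (simp add: mult.left_commute)
    ultimately have "t * (r * x) \<in> D" "r * x \<in> D" using mulD[OF r, of "t * x"] mulD[OF r, of x] by metis+
    then show "r * x \<in> K" unfolding K_def by simp
  qed
  have "P \<subseteq> K" using t idsub[OF PI] unfolding K_def by auto
  then have "K = P \<or> K = D" using M K unfolding maximal_ideal_of_def by blast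
  moreover have "c \<in> K" using c unfolding K_def by simp
  ultimately have "K = D" using cP by blast
  then have "1 \<in> K" by simp
  then show False using t unfolding K_def by simp
qed

lemma PA_cap:
  assumes P: "prime_ideal_of D P" "P \<noteq> {0}" and x: "x \<in> D" "\<iota> x \<in> PA P"
  shows "x \<in> P"
proof -
  obtain t where t: "t \<notin> D" "\<forall>p\<in>P. t * p \<in> D" using inverse_elem[OF P] by blast
  have "\<iota> (t * x) \<in> A" using PA_t[OF x(2) t(2)] by (simp add: hom_mult)
  then have "\<iota> (t * x) \<in> \<iota> ` D" using std by blast
  then obtain d where "d \<in> D" "\<iota> (t * x) = \<iota> d" by blast
  then have "t * x \<in> D" using iinj by metis
  then show ?thesis using tmul[OF primemax[OF P] t x(1)] by simp
qed

lemma prodD: "(\<And>i. i \<in> S \<Longrightarrow> f i \<in> D) \<Longrightarrow> prod f S \<in> D"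
  by (induction S rule: infinite_finite_induct) (auto intro: mulD)

lemma forward:
  assumes fI: "f \<in> IntK \<iota> A" and fD: "f \<notin> polys_over D"
  shows "\<exists>P. prime_ideal_of D P \<and> P \<noteq> {0} \<and> finite_quotient D P \<and> alg_bounded_degree_mod \<iota> D P A"
proof -
  define J where "J = {x \<in> D. \<forall>i. x * coeff f i \<in> D}"
  have J: "ideal_of D J" unfolding ideal_of_def J_def
    by (auto simp: distrib_right intro: addD mulD) (metis mulD mult.assoc)
  have "1 \<notin> J" using fD unfolding J_def polys_over_def by simp
  then have JD: "J \<noteq> D" by auto
  have bex: "\<exists>b. b \<in> D \<and> b \<noteq> 0 \<and> b * coeff f i \<in> D" for i
  proof -
    obtain a b where "a \<in> D" "b \<in> D" "b \<noteq> 0" "coeff f i = a / b" using fracf unfolding is_frac_field_of_def by blast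
    then show ?thesis by (intro exI[of _ b]) simp
  qed
  define b where "b i = (SOME b. b \<in> D \<and> b \<noteq> 0 \<and> b * coeff f i \<in> D)" for i
  have b: "b i \<in> D \<and> b i \<noteq> 0 \<and> b i * coeff f i \<in> D" for i
    unfolding b_def by (rule someI_ex[OF bex])
  define y where "y = (\<Prod>i\<le>degree f. b i)"
  have yJ: "y \<in> J" unfolding J_def
  proof (intro CollectI conjI allI)
    show "y \<in> D" unfolding y_def using b by (auto intro: prodD)
    fix i
    show "y * coeff f i \<in> D"
    proof (cases "i \<le> degree f")
      case True
      have "y = b i * (\<Prod>j\<in>{..degree f} - {i}. b j)" unfolding y_def
        using True by (subst prod.remove[of _ i]) auto
      then have e: "y * coeff f i = (b i * coeff f i) * (\<Prod>j\<in>{..degree f} - {i}. b j)" by simp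
      have "(b i * coeff f i) * (\<Prod>j\<in>{..degree f} - {i}. b j) \<in> D"
        by (rule mulD[OF _ prodD]) (use b in auto)
      then show ?thesis unfolding e .
    next
      case False then show ?thesis by (simp add: coeff_eq_0)
    qed
  qed
  have y0: "y \<noteq> 0" unfolding y_def using b by simp
  have J0: "J \<noteq> {0}" using yJ y0 by blast
  obtain P where M: "maximal_ideal_of D P" and JP: "J \<subseteq> P" using exists_max[OF J JD] by blast
  have P: "prime_ideal_of D P" using max_prime[OF M] .
  have PI: "ideal_of D P" using M unfolding maximal_ideal_of_def by simp
  have P0: "P \<noteq> {0}" using JP J0 id0[OF J] by blast
  obtain t where t: "t \<notin> D" "\<forall>p\<in>P. t * p \<in> D" using inverse_elem[OF P P0] by blast
  have "\<exists>x\<in>J. \<exists>i. x * coeff f i \<notin> P"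
  proof (rule ccontr)
    assume "\<not> ?thesis"
    then have inP: "\<And>x i. x \<in> J \<Longrightarrow> x * coeff f i \<in> P" by blast
    have "t \<in> D"
    proof (rule stable_integral[OF J J0])
      fix x assume x: "x \<in> J"
      have "t * x \<in> D" using t(2) JP x by blast
      moreover have "t * x * coeff f i \<in> D" for i
        using t(2) inP[OF x, of i] by (simp add: mult.assoc)
      ultimately show "t * x \<in> J" unfolding J_def by simp
    qed
    then show False using t(1) by simp
  qed
  then obtain x i where x: "x \<in> J" "x * coeff f i \<notin> P" by blast
  define h where "h = smult x f"
  have hD: "h \<in> polys_over D" using x(1) unfolding h_def J_def polys_over_def by simp
  have hP: "\<exists>i. coeff h i \<notin> P" using x(2) unfolding h_def by auto
  have hdeg: "degree h \<le> degree f" unfolding h_def by simp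
  have hval: "peval \<iota> h a \<in> PA P" if "a \<in> A" for a
  proof -
    have "peval \<iota> f a \<in> A" using fI that unfolding IntK_def by blast
    moreover have "x \<in> P" using x(1) JP by blast
    ultimately show ?thesis unfolding h_def peval_smult by (rule ext_ideal.gen[rotated])
  qed
  have "alg_bounded_degree_mod \<iota> D P A"
    unfolding alg_bounded_degree_mod_def using hD hP hdeg hval by blast
  moreover have "finite_quotient D P"
  proof (rule fq_from_poly[OF P hD hP])
    show "\<forall>d\<in>D. poly h d \<in> P"
    proof
      fix d assume d: "d \<in> D"
      have "\<iota> (poly h d) \<in> PA P" using hval[OF iA[OF d]] by (simp add: peval_iota)
      then show "poly h d \<in> P" using PA_cap[OF P P0 poly_D[OF hD d]] by simp
    qed
  qed
  ultimately show ?thesis using P P0 by blast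
qed


lemma backward:
  assumes P: "prime_ideal_of D P" "P \<noteq> {0}" and fq: "finite_quotient D P"
    and alg: "alg_bounded_degree_mod \<iota> D P A"
  shows "\<exists>f. f \<in> IntK \<iota> A \<and> f \<notin> polys_over D"
proof -
  have PI: "ideal_of D P" using P unfolding prime_ideal_of_def by simp
  have M: "maximal_ideal_of D P" using primemax[OF P] .
  obtain n where n: "\<forall>a\<in>A. \<exists>g. g \<in> polys_over D \<and> degree g \<le> n \<and> (\<exists>i. coeff g i \<notin> P) \<and> peval \<iota> g a \<in> PA P"
    using alg unfolding alg_bounded_degree_mod_def by blast
  obtain t where t: "t \<notin> D" "\<forall>p\<in>P. t * p \<in> D" using inverse_elem[OF P] by blast
  define C where "C = (\<lambda>a. (\<lambda>p. a + p) ` P) ` D"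
  have finC: "finite C" using fq unfolding finite_quotient_def C_def .
  define rep where "rep c = (SOME a. a \<in> D \<and> c = (\<lambda>p. a + p) ` P)" for c
  have rep: "rep c \<in> D \<and> c = (\<lambda>p. rep c + p) ` P" if "c \<in> C" for c
  proof -
    have "\<exists>a. a \<in> D \<and> c = (\<lambda>p. a + p) ` P" using that unfolding C_def by blast
    then show ?thesis unfolding rep_def by (rule someI_ex)
  qed
  define R where "R = insert 0 (rep ` C)"
  have finR: "finite R" unfolding R_def using finC by simp
  have RD: "R \<subseteq> D" unfolding R_def using rep by auto
  have redex: "\<exists>r. r \<in> R \<and> d - r \<in> P" if d: "d \<in> D" for d
  proof -
    define c where "c = (\<lambda>p. d + p) ` P"
    have c: "c \<in> C" unfolding c_def C_def using d by blast
    have "d \<in> c" unfolding c_def using id0[OF PI] by force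
    then have "d \<in> (\<lambda>p. rep c + p) ` P" using rep[OF c] by simp
    then obtain p where "p \<in> P" "d = rep c + p" by blast
    then have "d - rep c \<in> P" by simp
    moreover have "rep c \<in> R" unfolding R_def using c by blast
    ultimately show ?thesis by blast
  qed
  define red where "red d = (SOME r. r \<in> R \<and> d - r \<in> P)" for d
  have red: "red d \<in> R \<and> d - red d \<in> P" if "d \<in> D" for d
    unfolding red_def by (rule someI_ex[OF redex[OF that]])
  define S where "S = {s. degree s \<le> n \<and> (\<forall>i. coeff s i \<in> R)}"
  have finS: "finite S"
  proof -
    let ?r = "\<lambda>s::'k poly. restrict (coeff s) {..n}"
    have "inj_on ?r S"
    proof (rule inj_onI)
      fix s1 s2 assume s: "s1 \<in> S" "s2 \<in> S" "?r s1 = ?r s2"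
      show "s1 = s2"
      proof (rule poly_eqI)
        fix i
        show "coeff s1 i = coeff s2 i"
        proof (cases "i \<le> n")
          case True
          have "restrict (coeff s1) {..n} i = restrict (coeff s2) {..n} i" using s(3) by simp
          then show ?thesis using True by simp
        next
          case False then show ?thesis using s(1,2) unfolding S_def by (simp add: coeff_eq_0)
        qed
      qed
    qed
    moreover have "?r ` S \<subseteq> PiE {..n} (\<lambda>_. R)" unfolding S_def by (auto simp: PiE_def)
    then have "finite (?r ` S)" using finite_PiE[of "{..n}" "\<lambda>_. R"] finR finite_subset by blast
    ultimately show ?thesis using finite_imageD by blast
  qed
  define S' where "S' = {s \<in> S. \<exists>i. coeff s i \<notin> P}"
  have finS': "finite S'" unfolding S'_def using finS by simp
  have S'D: "s \<in> polys_over D" if "s \<in> S'" for s using that RD unfolding S'_def S_def polys_over_def by auto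
  define G where "G = \<Prod>S'"
  have Gprops: "\<Prod>T \<in> polys_over D \<and> (\<exists>i. coeff (\<Prod>T) i \<notin> P) \<and>
      (\<forall>a\<in>A. (\<exists>s\<in>T. peval \<iota> s a \<in> PA P) \<longrightarrow> peval \<iota> (\<Prod>T) a \<in> PA P)" if "T \<subseteq> S'" for T
  proof -
    have "finite T" using finS' that finite_subset by blast
    then show ?thesis using that
    proof (induction T rule: finite_induct)
      case empty
      have "1 \<notin> P" using id_one[OF PI] P(1) unfolding prime_ideal_of_def by blast
      then have "coeff 1 0 \<notin> P" by simp
      then show ?case using one_polys by auto
    next
      case (insert s T)
      have sD: "s \<in> polys_over D" and sP: "\<exists>i. coeff s i \<notin> P" using insert S'D unfolding S'_def by auto
      have IH: "\<Prod>T \<in> polys_over D" "\<exists>i. coeff (\<Prod>T) i \<notin> P"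
        "\<And>a. a \<in> A \<Longrightarrow> (\<exists>s\<in>T. peval \<iota> s a \<in> PA P) \<Longrightarrow> peval \<iota> (\<Prod>T) a \<in> PA P"
        using insert by auto
      have eq: "\<Prod>(insert s T) = s * \<Prod>T" using insert by simp
      have "s * \<Prod>T \<in> polys_over D" using mult_polys[OF sD IH(1)] .
      moreover have "\<exists>i. coeff (s * \<Prod>T) i \<notin> P" using gauss_modP[OF P(1) sD sP IH(1,2)] .
      moreover have "peval \<iota> (s * \<Prod>T) a \<in> PA P" if a: "a \<in> A" and ex: "\<exists>s'\<in>insert s T. peval \<iota> s' a \<in> PA P" for a
      proof -
        have As: "peval \<iota> s a \<in> A" "peval \<iota> (\<Prod>T) a \<in> A" using peval_A[OF sD a] peval_A[OF IH(1) a] by auto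
        show ?thesis
        proof (cases "peval \<iota> s a \<in> PA P")
          case True then show ?thesis unfolding peval_mult using PA_multR[OF True As(2)] by simp
        next
          case False
          then have "peval \<iota> (\<Prod>T) a \<in> PA P" using ex IH(3)[OF a] by auto
          then show ?thesis unfolding peval_mult using PA_multL[OF _ As(1)] by simp
        qed
      qed
      ultimately show ?case unfolding eq by blast
    qed
  qed
  have G: "G \<in> polys_over D" "\<exists>i. coeff G i \<notin> P"
      "\<And>a. a \<in> A \<Longrightarrow> (\<exists>s\<in>S'. peval \<iota> s a \<in> PA P) \<Longrightarrow> peval \<iota> G a \<in> PA P"
    using Gprops[of S'] unfolding G_def by auto
  have cover: "\<exists>s\<in>S'. peval \<iota> s a \<in> PA P" if a: "a \<in> A" for a
  proof -
    obtain g where g: "g \<in> polys_over D" "degree g \<le> n" "\<exists>i. coeff g i \<notin> P" "peval \<iota> g a \<in> PA P"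
      using n a by blast
    define s where "s = Poly (map (\<lambda>i. red (coeff g i)) [0..<Suc n])"
    have cs: "coeff s i = (if i \<le> n then red (coeff g i) else 0)" for i
      unfolding s_def by (auto simp: nth_default_def less_Suc_eq_le simp del: upt_Suc)
    have dif: "coeff s i - coeff g i \<in> P" for i
    proof (cases "i \<le> n")
      case True
      have "coeff g i - red (coeff g i) \<in> P" using red[OF polys_D[OF g(1)]] by simp
      then have "- (coeff g i - red (coeff g i)) \<in> P" by (rule idneg[OF PI])
      then show ?thesis using True cs by simp
    next
      case False then show ?thesis using cs g(2) id0[OF PI] by (simp add: coeff_eq_0)
    qed
    have sS: "s \<in> S" unfolding S_def
    proof (intro CollectI conjI allI)
      show "degree s \<le> n" by (rule degree_le) (simp add: cs)
      fix i show "coeff s i \<in> R" using cs red[OF polys_D[OF g(1)]] R_def by auto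
    qed
    have "\<exists>i. coeff s i \<notin> P"
    proof -
      obtain i where i: "coeff g i \<notin> P" using g(3) by blast
      have "coeff s i \<notin> P"
      proof
        assume "coeff s i \<in> P"
        then have "coeff s i - (coeff s i - coeff g i) \<in> P" using iddiff[OF PI _ dif] by blast
        then show False using i by simp
      qed
      then show ?thesis by blast
    qed
    then have "s \<in> S'" using sS unfolding S'_def by simp
    moreover have "peval \<iota> s a \<in> PA P"
    proof -
      have "peval \<iota> (s - g) a \<in> PA P" using peval_PA[OF _ a] dif by simp
      then have "peval \<iota> g a + peval \<iota> (s - g) a \<in> PA P" using PA_add g(4) by blast
      then show ?thesis by (simp add: peval_diff)
    qed
    ultimately show ?thesis by blast
  qed
  define f where "f = smult t G"
  have "f \<in> IntK \<iota> A" unfolding IntK_def f_def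
  proof (intro CollectI ballI)
    fix a assume a: "a \<in> A"
    show "peval \<iota> (smult t G) a \<in> A" unfolding peval_smult using PA_t[OF G(3)[OF a cover[OF a]] t(2)] .
  qed
  moreover have "f \<notin> polys_over D"
  proof
    assume "f \<in> polys_over D"
    obtain i where i: "coeff G i \<notin> P" using G(2) by blast
    have "t * coeff G i \<in> D" using \<open>f \<in> polys_over D\<close> unfolding f_def polys_over_def by simp
    then have "coeff G i \<in> P" using tmul[OF M t polys_D[OF G(1)]] by simp
    then show False using i by simp
  qed
  ultimately show ?thesis by blast
qed

end

theorem mainTheorem9:
  fixes D :: "'k::field set" and A :: "'b::ring_1 set" and \<iota> :: "'k \<Rightarrow> 'b"
  assumes ded: "dedekind_domain_in D"
    and hom_add: "\<And>x y. \<iota> (x + y) = \<iota> x + \<iota> y"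
    and hom_mult: "\<And>x y. \<iota> (x * y) = \<iota> x * \<iota> y"
    and hom_one: "\<iota> 1 = 1"
    and central: "\<And>x b. \<iota> x * b = b * \<iota> x"
    and A_sub: "0 \<in> A" "1 \<in> A" "\<And>x y. x \<in> A \<Longrightarrow> y \<in> A \<Longrightarrow> x + y \<in> A"
      "\<And>x. x \<in> A \<Longrightarrow> - x \<in> A" "\<And>x y. x \<in> A \<Longrightarrow> y \<in> A \<Longrightarrow> x * y \<in> A"
    and D_in_A: "\<iota> ` D \<subseteq> A"
    and tensor: "\<And>b. \<exists>d\<in>D. d \<noteq> 0 \<and> \<iota> d * b \<in> A"
    and std: "A \<inter> range \<iota> = \<iota> ` D"
  shows "IntK \<iota> A \<noteq> polys_over D \<longleftrightarrow>
    (\<exists>P. prime_ideal_of D P \<and> P \<noteq> {0} \<and> finite_quotient D P \<and>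
         alg_bounded_degree_mod \<iota> D P A)"
proof -
  interpret setting D A \<iota>
    by unfold_locales (fact assms)+
  show ?thesis
  proof
    assume "IntK \<iota> A \<noteq> polys_over D"
    then obtain f where "f \<in> IntK \<iota> A" "f \<notin> polys_over D" using polys_sub_Int by blast
    then show "\<exists>P. prime_ideal_of D P \<and> P \<noteq> {0} \<and> finite_quotient D P \<and> alg_bounded_degree_mod \<iota> D P A"
      by (rule forward)
  next
    assume "\<exists>P. prime_ideal_of D P \<and> P \<noteq> {0} \<and> finite_quotient D P \<and> alg_bounded_degree_mod \<iota> D P A"
    then obtain P where "prime_ideal_of D P" "P \<noteq> {0}" "finite_quotient D P" "alg_bounded_degree_mod \<iota> D P A"
      by blast
    then obtain f where "f \<in> IntK \<iota> A" "f \<notin> polys_over D" using backward by blast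
    then show "IntK \<iota> A \<noteq> polys_over D" by blast
  qed
qed

end
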